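(* Let $r,s\in\widetilde{\mathbb{K}}_{sm}$. The following are equivalent: (i) $rs=0$; (ii) there exists $x\in\widetilde{\mathbb{K}}_{sm}$ such that $rx=0$ and $s(1-x)=0$; (iii) $\mathrm{Ann}(r)+\mathrm{Ann}(s)=\widetilde{\mathbb{K}}_{sm}$; (iv) $|r|\wedge|s|=0$.
   Context: Let $I=(0,1]$ and $\mathbb{K}\in\{\mathbb{R},\mathbb{C}\}$. $\widetilde{\mathbb{K}}_{sm}=\mathcal{E}_{M,sm}/\mathcal{N}_{sm}$ where $\mathcal{E}_{M,sm}$ is the set of nets $(r_\varepsilon)_{\varepsilon\in I}\in\mathbb{K}^I$ smooth in $\varepsilon$ with $|r_\varepsilon|=O(\varepsilon^{-N})$ for some $N$, and $\mathcal{N}_{sm}$ those with $|r_\varepsilon|=O(\varepsilon^m)$ for all $m$; $\widetilde{\mathbb{K}}_{co}$, $\mathcal{N}_{co}$ are defined analogously with continuous nets, and $\tau_{sm}:\widetilde{\mathbb{K}}_{sm}\to\widetilde{\mathbb{K}}_{co}$, $[(r_\varepsilon)]\mapsto[(r_\varepsilon)]$, is a ring isomorphism. For $r=[(r_\varepsilon)_\varepsilon]$, $|r|:=\tau_{sm}^{-1}([(|r_\varepsilon|)_\varepsilon])\in\widetilde{\mathbb{R}}_{sm}\subseteq\widetilde{\mathbb{K}}_{sm}$. For $a,b\in\widetilde{\mathbb{R}}_{sm}$, $a\wedge b=\tau_{sm}^{-1}([(\min(a_\varepsilon,b_\varepsilon))_\varepsilon])$. $\mathrm{Ann}(r)=\{t\in\widetilde{\mathbb{K}}_{sm}: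 rt=0\}$. *)

theory Defs
  imports "HOL-Analysis.Analysis" "HOL-Algebra.QuotRing"
begin

text \<open>Nets are functions real to K; only their values on I = (0,1] matter.\<close>

abbreviation Iset :: "real set" where "Iset \<equiv> {0<..1}"

definition smooth_net :: "(real \<Rightarrow> 'a::real_normed_vector) \<Rightarrow> bool" where
  "smooth_net f \<longleftrightarrow> (\<exists>D :: nat \<Rightarrow> real \<Rightarrow> 'a.
      (\<forall>e\<in>Iset. D 0 e = f e) \<and>
      (\<forall>n. \<forall>e\<in>Iset. (D n has_vector_derivative D (Suc n) e) (at e within Iset)))"

definition cont_net :: "(real \<Rightarrow> 'a::real_normed_vector) \<Rightarrow> bool" where
  "cont_net f \<longleftrightarrow> continuous_on Iset f"

definition moderate :: "(real \<Rightarrow> 'a::real_normed_vector) \<Rightarrow> bool" where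
  "moderate f \<longleftrightarrow> (\<exists>N::nat. \<exists>C e0. e0 > 0 \<and>
      (\<forall>e\<in>{0<..min e0 1}. norm (f e) \<le> C / e ^ N))"

definition negligible :: "(real \<Rightarrow> 'a::real_normed_vector) \<Rightarrow> bool" where
  "negligible f \<longleftrightarrow> (\<forall>m::nat. \<exists>C e0. e0 > 0 \<and>
      (\<forall>e\<in>{0<..min e0 1}. norm (f e) \<le> C * e ^ m))"

definition net_ring :: "(real \<Rightarrow> 'a::real_normed_field) set \<Rightarrow> (real \<Rightarrow> 'a) ring" where
  "net_ring A = \<lparr>carrier = A, monoid.mult = (\<lambda>f g e. f e * g e), one = (\<lambda>_. 1),
                  zero = (\<lambda>_. 0), add = (\<lambda>f g e. f e + g e)\<rparr>"

definition EM_sm :: "(real \<Rightarrow> 'a::real_normed_field) set" where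
  "EM_sm = {f. smooth_net f \<and> moderate f}"
definition N_sm :: "(real \<Rightarrow> 'a::real_normed_field) set" where
  "N_sm = {f. smooth_net f \<and> negligible f}"
definition EM_co :: "(real \<Rightarrow> 'a::real_normed_field) set" where
  "EM_co = {f. cont_net f \<and> moderate f}"
definition N_co :: "(real \<Rightarrow> 'a::real_normed_field) set" where
  "N_co = {f. cont_net f \<and> negligible f}"

definition Ksm :: "(real \<Rightarrow> 'a::real_normed_field) set ring" where
  "Ksm = net_ring EM_sm Quot N_sm"
definition Kco :: "(real \<Rightarrow> 'a::real_normed_field) set ring" where
  "Kco = net_ring EM_co Quot N_co"

definition co_class :: "(real \<Rightarrow> 'a::real_normed_field) \<Rightarrow> (real \<Rightarrow> 'a) set" where
  "co_class f = a_r_coset (net_ring EM_co) N_co f"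

definition tau_sm :: "(real \<Rightarrow> 'a::real_normed_field) set \<Rightarrow> (real \<Rightarrow> 'a) set" where
  "tau_sm c = co_class (SOME f. f \<in> c)"

definition gabs :: "(real \<Rightarrow> 'a::real_normed_field) set \<Rightarrow> (real \<Rightarrow> real) set" where
  "gabs r = inv_into (carrier Ksm) tau_sm
              (co_class (\<lambda>e. norm ((SOME f. f \<in> r) e)))"

definition gwedge :: "(real \<Rightarrow> real) set \<Rightarrow> (real \<Rightarrow> real) set \<Rightarrow> (real \<Rightarrow> real) set" where
  "gwedge a b = inv_into (carrier Ksm) tau_sm
              (co_class (\<lambda>e. min ((SOME f. f \<in> a) e) ((SOME f. f \<in> b) e)))"

definition Ann :: "('a, 'b) ring_scheme \<Rightarrow> 'a \<Rightarrow> 'a set" where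
  "Ann R r = {t \<in> carrier R. r \<otimes>\<^bsub>R\<^esub> t = \<zero>\<^bsub>R\<^esub>}"

end

theory Submission
  imports Defs
begin


lemma net_ring_simps[simp]:
  "carrier (net_ring A) = A"
  "x \<otimes>\<^bsub>net_ring A\<^esub> y = (\<lambda>e. x e * y e)"
  "x \<oplus>\<^bsub>net_ring A\<^esub> y = (\<lambda>e. x e + y e)"
  "\<one>\<^bsub>net_ring A\<^esub> = (\<lambda>_. 1)"
  "\<zero>\<^bsub>net_ring A\<^esub> = (\<lambda>_. 0)"
  by (simp_all add: net_ring_def)

locale netalg =
  fixes A :: "(real \<Rightarrow> 'a::real_normed_field) set"
  assumes add_cl: "f \<in> A \<Longrightarrow> g \<in> A \<Longrightarrow> (\<lambda>e. f e + g e) \<in> A"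
    and mult_cl: "f \<in> A \<Longrightarrow> g \<in> A \<Longrightarrow> (\<lambda>e. f e * g e) \<in> A"
    and uminus_cl: "f \<in> A \<Longrightarrow> (\<lambda>e. - f e) \<in> A"
    and zero_cl: "(\<lambda>_. 0) \<in> A" and one_cl: "(\<lambda>_. 1) \<in> A"
begin

lemma cring: "cring (net_ring A)"
proof (rule cringI)
  show "abelian_group (net_ring A)"
  proof (rule abelian_groupI, simp_all add: add_cl zero_cl)
    fix x assume "x \<in> A"
    then show "\<exists>y\<in>A. (\<lambda>e. y e + x e) = (\<lambda>_. 0)"
      by (intro bexI[of _ "\<lambda>e. - x e"]) (auto intro: uminus_cl)
  qed (auto simp: algebra_simps)
  show "comm_monoid (net_ring A)"
    by (rule comm_monoidI) (auto simp: mult_cl one_cl algebra_simps)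
qed (auto simp: algebra_simps)

lemma a_inv: "f \<in> A \<Longrightarrow> \<ominus>\<^bsub>net_ring A\<^esub> f = (\<lambda>e. - f e)"
proof -
  assume f: "f \<in> A"
  interpret R: cring "net_ring A" by (rule cring)
  show ?thesis by (rule R.minus_equality) (auto intro: uminus_cl f)
qed

lemma minus: "f \<in> A \<Longrightarrow> g \<in> A \<Longrightarrow> f \<ominus>\<^bsub>net_ring A\<^esub> g = (\<lambda>e. f e - g e)"
  by (simp add: a_minus_def a_inv)

lemma ideal:
  assumes "J \<subseteq> A" "(\<lambda>_. 0) \<in> J" "\<And>f g. f \<in> J \<Longrightarrow> g \<in> J \<Longrightarrow> (\<lambda>e. f e + g e) \<in> J"
    "\<And>f. f \<in> J \<Longrightarrow> (\<lambda>e. - f e) \<in> J"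
    "\<And>f g. f \<in> J \<Longrightarrow> g \<in> A \<Longrightarrow> (\<lambda>e. g e * f e) \<in> J"
  shows "ideal J (net_ring A)"
proof (rule idealI)
  show "ring (net_ring A)" using cring cring.axioms(1) by blast
  then interpret R: ring "net_ring A" .
  show "subgroup J (add_monoid (net_ring A))"
  proof (rule R.add.subgroupI, goal_cases)
    case 1 then show ?case using assms(1) by simp
  next
    case 2 then show ?case using assms(2) by blast
  next
    case (3 a)
    have "a \<in> A" using 3 assms(1) by blast
    then have "\<ominus>\<^bsub>net_ring A\<^esub> a = (\<lambda>e. - a e)" by (rule a_inv)
    then show ?case using assms(4)[OF 3] unfolding a_inv_def by simp
  next
    case (4 a b) then show ?case using assms(3) by simp
  qed
next
  fix a x assume "a \<in> J" "x \<in> carrier (net_ring A)"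
  then show "x \<otimes>\<^bsub>net_ring A\<^esub> a \<in> J" using assms(5) by simp
next
  fix a x assume "a \<in> J" "x \<in> carrier (net_ring A)"
  then show "a \<otimes>\<^bsub>net_ring A\<^esub> x \<in> J" using assms(5)[of a x] by (simp add: mult.commute)
qed

end


lemma ev_iff: "(\<exists>e0. e0 > 0 \<and> (\<forall>e\<in>{0<..min e0 1}. P e)) \<longleftrightarrow> eventually P (at_right (0::real))"
  unfolding eventually_at_right_field
proof safe
  fix e0 :: real assume "e0 > 0" "\<forall>e\<in>{0<..min e0 1}. P e"
  then show "\<exists>b>0. \<forall>y>0. y < b \<longrightarrow> P y" by (intro exI[of _ "min e0 1"]) auto
next
  fix b :: real assume "b > 0" "\<forall>y>0. y < b \<longrightarrow> P y"
  then show "\<exists>e0>0. \<forall>e\<in>{0<..min e0 1}. P e" by (intro exI[of _ "b/2"]) auto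
qed

definition negl :: "(real \<Rightarrow> 'a::real_normed_vector) \<Rightarrow> bool" where
  "negl f \<longleftrightarrow> (\<forall>m::nat. \<exists>C. \<forall>\<^sub>F e in at_right 0. norm (f e) \<le> C * e ^ m)"
definition modr :: "(real \<Rightarrow> 'a::real_normed_vector) \<Rightarrow> bool" where
  "modr f \<longleftrightarrow> (\<exists>N::nat. \<exists>C. \<forall>\<^sub>F e in at_right 0. norm (f e) \<le> C / e ^ N)"

lemma negligible_iff: "negligible f \<longleftrightarrow> negl f"
  unfolding negligible_def negl_def ev_iff ..

lemma moderate_iff: "moderate f \<longleftrightarrow> modr f"
  unfolding moderate_def modr_def ev_iff ..

lemma ev_pos: "\<forall>\<^sub>F e in at_right (0::real). 0 < e"
  by (simp add: eventually_at_right_less)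

lemma ev_le1: "\<forall>\<^sub>F e in at_right (0::real). e \<le> 1"
  unfolding eventually_at_right_field by (intro exI[of _ 1]) auto

lemma negl_le:
  assumes "negl f" "\<forall>\<^sub>F e in at_right 0. norm (g e) \<le> K * norm (f e)"
  shows "negl g"
  unfolding negl_def
proof
  fix m
  obtain C where C: "\<forall>\<^sub>F e in at_right 0. norm (f e) \<le> C * e ^ m" using assms(1) negl_def by blast
  have "\<forall>\<^sub>F e in at_right 0. norm (g e) \<le> (\<bar>K\<bar> * C) * e ^ m"
    using C assms(2)
  proof eventually_elim
    case (elim e)
    have "norm (g e) \<le> \<bar>K\<bar> * norm (f e)" using elim(2) by (smt (verit) mult_right_mono norm_ge_zero)
    also have "\<dots> \<le> \<bar>K\<bar> * (C * e ^ m)" using elim(1) by (simp add: mult_left_mono)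
    finally show ?case by simp
  qed
  then show "\<exists>C. \<forall>\<^sub>F e in at_right 0. norm (g e) \<le> C * e ^ m" by blast
qed

lemma modr_le:
  assumes "modr f" "\<forall>\<^sub>F e in at_right 0. norm (g e) \<le> K * norm (f e)"
  shows "modr g"
proof -
  obtain N C where C: "\<forall>\<^sub>F e in at_right 0. norm (f e) \<le> C / e ^ N" using assms(1) modr_def by blast
  have "\<forall>\<^sub>F e in at_right 0. norm (g e) \<le> (\<bar>K\<bar> * C) / e ^ N"
    using C assms(2)
  proof eventually_elim
    case (elim e)
    have "norm (g e) \<le> \<bar>K\<bar> * norm (f e)" using elim(2) by (smt (verit) mult_right_mono norm_ge_zero)
    also have "\<dots> \<le> \<bar>K\<bar> * (C / e ^ N)" using elim(1) by (intro mult_left_mono) auto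
    finally show ?case by simp
  qed
  then show ?thesis unfolding modr_def by blast
qed

lemma negl_add:
  assumes "negl f" "negl g" shows "negl (\<lambda>e. f e + g e)"
  unfolding negl_def
proof
  fix m
  obtain C where C: "\<forall>\<^sub>F e in at_right 0. norm (f e) \<le> C * e ^ m" using assms(1) negl_def by blast
  obtain D where D: "\<forall>\<^sub>F e in at_right 0. norm (g e) \<le> D * e ^ m" using assms(2) negl_def by blast
  have "\<forall>\<^sub>F e in at_right 0. norm (f e + g e) \<le> (C + D) * e ^ m"
    using C D by eventually_elim (smt (verit) distrib_right norm_triangle_ineq)
  then show "\<exists>C. \<forall>\<^sub>F e in at_right 0. norm (f e + g e) \<le> C * e ^ m" by blast
qed

lemma modr_add:
  assumes "modr f" "modr g" shows "modr (\<lambda>e. f e + g e)"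
proof -
  obtain N C where C: "\<forall>\<^sub>F e in at_right 0. norm (f e) \<le> C / e ^ N" using assms(1) modr_def by blast
  obtain M D where D: "\<forall>\<^sub>F e in at_right 0. norm (g e) \<le> D / e ^ M" using assms(2) modr_def by blast
  have "\<forall>\<^sub>F e in at_right 0. norm (f e + g e) \<le> (\<bar>C\<bar> + \<bar>D\<bar>) / e ^ (N + M)"
    using C D ev_pos ev_le1
  proof eventually_elim
    case (elim e)
    have a: "C / e ^ N \<le> \<bar>C\<bar> / e ^ (N + M)"
    proof -
      have "e ^ (N+M) \<le> e ^ N" using elim by (simp add: power_decreasing)
      then have "\<bar>C\<bar> / e ^ N \<le> \<bar>C\<bar> / e ^ (N + M)" using elim by (intro divide_left_mono) auto
      moreover have "C / e ^ N \<le> \<bar>C\<bar> / e ^ N" using elim by (intro divide_right_mono) auto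
      ultimately show ?thesis by linarith
    qed
    have b: "D / e ^ M \<le> \<bar>D\<bar> / e ^ (N + M)"
    proof -
      have "e ^ (N+M) \<le> e ^ M" using elim by (simp add: power_decreasing)
      then have "\<bar>D\<bar> / e ^ M \<le> \<bar>D\<bar> / e ^ (N + M)" using elim by (intro divide_left_mono) auto
      moreover have "D / e ^ M \<le> \<bar>D\<bar> / e ^ M" using elim by (intro divide_right_mono) auto
      ultimately show ?thesis by linarith
    qed
    have "norm (f e + g e) \<le> norm (f e) + norm (g e)" by (rule norm_triangle_ineq)
    also have "\<dots> \<le> (\<bar>C\<bar> + \<bar>D\<bar>) / e ^ (N + M)" using a b elim(1,2) by (simp add: add_divide_distrib)
    finally show ?case .
  qed
  then show ?thesis unfolding modr_def by blast
qed

lemma modr_mult: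
  fixes f g :: "real \<Rightarrow> 'a::real_normed_field"
  assumes "modr f" "modr g" shows "modr (\<lambda>e. f e * g e)"
proof -
  obtain N C where C: "\<forall>\<^sub>F e in at_right 0. norm (f e) \<le> C / e ^ N" using assms(1) modr_def by blast
  obtain M D where D: "\<forall>\<^sub>F e in at_right 0. norm (g e) \<le> D / e ^ M" using assms(2) modr_def by blast
  have "\<forall>\<^sub>F e in at_right 0. norm (f e * g e) \<le> (C * D) / e ^ (N + M)"
    using C D ev_pos
  proof eventually_elim
    case (elim e)
    have "norm (f e * g e) = norm (f e) * norm (g e)" by (simp add: norm_mult)
    also have "\<dots> \<le> (C / e ^ N) * (D / e ^ M)"
      using elim by (intro mult_mono) (auto intro: order_trans[OF norm_ge_zero])
    also have "\<dots> = (C * D) / e ^ (N + M)" by (simp add: power_add)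
    finally show ?case .
  qed
  then show ?thesis unfolding modr_def by blast
qed

lemma negl_mult:
  fixes f g :: "real \<Rightarrow> 'a::real_normed_field"
  assumes "negl f" "modr g" shows "negl (\<lambda>e. g e * f e)"
  unfolding negl_def
proof
  fix m
  obtain N D where D: "\<forall>\<^sub>F e in at_right 0. norm (g e) \<le> D / e ^ N" using assms(2) modr_def by blast
  obtain C where C: "\<forall>\<^sub>F e in at_right 0. norm (f e) \<le> C * e ^ (m + N)" using assms(1) negl_def by blast
  have "\<forall>\<^sub>F e in at_right 0. norm (g e * f e) \<le> (D * C) * e ^ m"
    using C D ev_pos
  proof eventually_elim
    case (elim e)
    have "norm (g e * f e) = norm (g e) * norm (f e)" by (simp add: norm_mult)
    also have "\<dots> \<le> (D / e ^ N) * (C * e ^ (m + N))"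
      using elim by (intro mult_mono) (auto intro: order_trans[OF norm_ge_zero])
    also have "\<dots> = (D * C) * e ^ m"
    proof -
      have "e \<noteq> 0" using elim by simp
      then show ?thesis by (simp add: power_add)
    qed
    finally show ?case .
  qed
  then show "\<exists>C. \<forall>\<^sub>F e in at_right 0. norm (g e * f e) \<le> C * e ^ m" by blast
qed

lemma negl_modr: "negl f \<Longrightarrow> modr f"
proof -
  assume "negl f"
  then obtain C where "\<forall>\<^sub>F e in at_right 0. norm (f e) \<le> C * e ^ 0" unfolding negl_def by blast
  then show "modr f" unfolding modr_def by (intro exI[of _ 0] exI[of _ C]) simp
qed

lemma modr_const: "modr (\<lambda>_. c)"
  unfolding modr_def by (intro exI[of _ 0] exI[of _ "norm c"]) simp

lemma negl_zero: "negl (\<lambda>_. 0)"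
  unfolding negl_def by (auto intro!: exI[of _ 0])

lemma negl_uminus: "negl f \<Longrightarrow> negl (\<lambda>e. - f e)"
  by (rule negl_le[where K=1]) auto

lemma modr_uminus: "modr f \<Longrightarrow> modr (\<lambda>e. - f e)"
  by (rule modr_le[where K=1]) auto

lemma negl_sqrt:
  fixes f :: "real \<Rightarrow> real"
  assumes "negl f" shows "negl (\<lambda>e. sqrt \<bar>f e\<bar>)"
  unfolding negl_def
proof
  fix m
  obtain C where C: "\<forall>\<^sub>F e in at_right 0. norm (f e) \<le> C * e ^ (2*m)" using assms(1) negl_def by blast
  have "\<forall>\<^sub>F e in at_right 0. norm (sqrt \<bar>f e\<bar>) \<le> sqrt \<bar>C\<bar> * e ^ m"
    using C ev_pos
  proof eventually_elim
    case (elim e)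
    have "sqrt \<bar>f e\<bar> \<le> sqrt (\<bar>C\<bar> * (e ^ m)\<^sup>2)"
    proof (rule real_sqrt_le_mono)
      have "e ^ (2*m) = (e^m)\<^sup>2" by (simp add: power_mult mult.commute)
      then have "\<bar>f e\<bar> \<le> C * (e^m)\<^sup>2" using elim by simp
      moreover have "C * (e^m)\<^sup>2 \<le> \<bar>C\<bar> * (e^m)\<^sup>2" by (intro mult_right_mono) auto
      ultimately show "\<bar>f e\<bar> \<le> \<bar>C\<bar> * (e ^ m)\<^sup>2" by linarith
    qed
    also have "\<dots> = sqrt \<bar>C\<bar> * e ^ m" using elim by (simp add: real_sqrt_mult)
    finally show ?case by simp
  qed
  then show "\<exists>C. \<forall>\<^sub>F e in at_right 0. norm (sqrt \<bar>f e\<bar>) \<le> C * e ^ m" by blast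
qed

lemma negl_exp: "negl (\<lambda>e::real. exp (- 1 / e))"
  unfolding negl_def
proof
  fix m :: nat
  define n where "n = Suc m"
  have "\<forall>\<^sub>F e in at_right 0. norm (exp (- 1 / e)) \<le> (real n ^ n) * e ^ m"
    using ev_pos ev_le1
  proof eventually_elim
    case (elim e)
    have "(1 + (1/e) / real n) ^ n \<le> exp (1/e)"
    proof (rule exp_ge_one_plus_x_over_n_power_n)
      have "0 < 1/e" using elim by simp
      then show "- real n \<le> 1/e" by (smt (verit) of_nat_0_le_iff)
    qed (simp add: n_def)
    moreover have "(1 / (e * real n)) ^ n \<le> (1 + (1/e) / real n) ^ n"
      using elim by (intro power_mono) (auto simp: n_def)
    ultimately have le: "(1 / (e * real n)) ^ n \<le> exp (1/e)" by linarith
    have pos: "0 < (1 / (e * real n)) ^ n" using elim by (simp add: n_def)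
    have "exp (- 1 / e) = inverse (exp (1/e))" by (simp add: exp_minus[symmetric])
    also have "\<dots> \<le> inverse ((1 / (e * real n)) ^ n)" using le pos by (rule le_imp_inverse_le)
    also have "\<dots> = real n ^ n * e ^ n" by (simp add: power_mult_distrib field_simps)
    also have "\<dots> \<le> real n ^ n * e ^ m" using elim by (intro mult_left_mono power_decreasing) (auto simp: n_def)
    finally show ?case by simp
  qed
  then show "\<exists>C. \<forall>\<^sub>F e in at_right 0. norm (exp (- 1 / e)) \<le> C * e ^ m" by blast
qed



definition dI :: "(real \<Rightarrow> 'a::real_normed_vector) \<Rightarrow> (real \<Rightarrow> 'a) \<Rightarrow> bool" where
  "dI f f' \<longleftrightarrow> (\<forall>e\<in>Iset. (f has_vector_derivative f' e) (at e within Iset))"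

lemma smooth_coind:
  assumes "P f" "\<And>g. P g \<Longrightarrow> \<exists>g'. dI g g' \<and> P g'"
  shows "smooth_net f"
proof -
  define d where "d g = (SOME g'. dI g g' \<and> P g')" for g
  have dP: "dI g (d g) \<and> P (d g)" if "P g" for g
    unfolding d_def using assms(2)[OF that] by (rule someI_ex)
  define D where "D n = (d ^^ n) f" for n
  have PD: "P (D n)" for n by (induction n) (simp_all add: D_def dP assms(1))
  have "dI (D n) (D (Suc n))" for n using dP[OF PD[of n]] by (simp add: D_def)
  then show ?thesis unfolding smooth_net_def dI_def
    by (intro exI[of _ D]) (auto simp: D_def)
qed

lemma smooth_deriv:
  assumes "smooth_net f" shows "\<exists>f'. dI f f' \<and> smooth_net f'"
proof -
  obtain D where D0: "\<forall>e\<in>Iset. D 0 e = f e"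
    and DS: "\<forall>n. \<forall>e\<in>Iset. (D n has_vector_derivative D (Suc n) e) (at e within Iset)"
    using assms unfolding smooth_net_def by blast
  have "dI f (D (Suc 0))" unfolding dI_def
  proof
    fix e assume e: "e \<in> Iset"
    have d: "(D 0 has_vector_derivative D (Suc 0) e) (at e within Iset)" using DS e by blast
    show "(f has_vector_derivative D (Suc 0) e) (at e within Iset)"
      by (rule has_vector_derivative_transform[OF e _ d]) (use D0 in auto)
  qed
  moreover have "smooth_net (D (Suc 0))" unfolding smooth_net_def
    by (intro exI[of _ "\<lambda>n. D (Suc n)"]) (use DS in auto)
  ultimately show ?thesis by blast
qed

lemma smooth_cont: "smooth_net f \<Longrightarrow> continuous_on Iset f"
  using smooth_deriv[of f] unfolding dI_def
  by (auto intro: continuous_on_vector_derivative)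

lemma smooth_const: "smooth_net (\<lambda>_. c)"
  by (rule smooth_coind[where P="\<lambda>g. \<exists>c. g = (\<lambda>_. c)"])
    (auto simp: dI_def intro!: exI[of _ "\<lambda>_. 0"] derivative_eq_intros)

lemma smooth_id: "smooth_net (\<lambda>e. e)"
proof (rule smooth_coind[where P="\<lambda>g. g = (\<lambda>e. e) \<or> (\<exists>c. g = (\<lambda>_. c))"])
  fix g :: "real \<Rightarrow> real" assume "g = (\<lambda>e. e) \<or> (\<exists>c. g = (\<lambda>_. c))"
  then show "\<exists>g'. dI g g' \<and> (g' = (\<lambda>e. e) \<or> (\<exists>c. g' = (\<lambda>_. c)))"
  proof
    assume "g = (\<lambda>e. e)" then show ?thesis
      by (auto simp: dI_def intro!: exI[of _ "\<lambda>_. 1"] derivative_eq_intros)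
  next
    assume "\<exists>c. g = (\<lambda>_. c)" then show ?thesis
      by (auto simp: dI_def intro!: exI[of _ "\<lambda>_. 0"] derivative_eq_intros)
  qed
qed simp

lemma smooth_linear:
  assumes L: "bounded_linear L" and f: "smooth_net f"
  shows "smooth_net (\<lambda>e. L (f e))"
proof -
  obtain D where D0: "\<forall>e\<in>Iset. D 0 e = f e"
    and DS: "\<forall>n. \<forall>e\<in>Iset. (D n has_vector_derivative D (Suc n) e) (at e within Iset)"
    using f unfolding smooth_net_def by blast
  show ?thesis unfolding smooth_net_def
    by (intro exI[of _ "\<lambda>n e. L (D n e)"])
      (use D0 DS bounded_linear.has_vector_derivative[OF L] in auto)
qed

lemma smooth_cong: "smooth_net f \<Longrightarrow> (\<And>e. e \<in> Iset \<Longrightarrow> f e = g e) \<Longrightarrow> smooth_net g"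
  unfolding smooth_net_def by auto

inductive_set TG :: "(real \<Rightarrow> 'a::real_normed_field) set" where
  base: "smooth_net f \<Longrightarrow> f \<in> TG"
| add: "f \<in> TG \<Longrightarrow> g \<in> TG \<Longrightarrow> (\<lambda>e. f e + g e) \<in> TG"
| mult: "f \<in> TG \<Longrightarrow> g \<in> TG \<Longrightarrow> (\<lambda>e. f e * g e) \<in> TG"

lemma TG_deriv: "f \<in> TG \<Longrightarrow> \<exists>f'. dI f f' \<and> f' \<in> TG"
proof (induction rule: TG.induct)
  case (base f) then show ?case using smooth_deriv TG.base by blast
next
  case (add f g)
  then obtain f' g' where d: "dI f f'" "f' \<in> TG" "dI g g'" "g' \<in> TG" by blast
  have "(\<lambda>e. f' e + g' e) \<in> TG" by (rule TG.add[OF d(2) d(4)])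
  moreover have "dI (\<lambda>e. f e + g e) (\<lambda>e. f' e + g' e)"
    using d(1,3) unfolding dI_def by (auto intro: has_vector_derivative_add)
  ultimately show ?case by blast
next
  case (mult f g)
  then obtain f' g' where d: "dI f f'" "f' \<in> TG" "dI g g'" "g' \<in> TG" by blast
  have "(\<lambda>e. f e * g' e + f' e * g e) \<in> TG"
    by (rule TG.add[OF TG.mult[OF mult(1) d(4)] TG.mult[OF d(2) mult(2)]])
  moreover have "dI (\<lambda>e. f e * g e) (\<lambda>e. f e * g' e + f' e * g e)"
    using d(1,3) unfolding dI_def by (auto intro: has_vector_derivative_mult)
  ultimately show ?case by blast
qed

lemma TG_smooth: "f \<in> TG \<Longrightarrow> smooth_net f"
  by (rule smooth_coind[where P="\<lambda>f. f \<in> TG"]) (use TG_deriv in blast)+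

lemma smooth_add:
  fixes f g :: "real \<Rightarrow> 'a::real_normed_field"
  shows "smooth_net f \<Longrightarrow> smooth_net g \<Longrightarrow> smooth_net (\<lambda>e. f e + g e)"
  by (rule TG_smooth, rule TG.add; rule TG.base)

lemma smooth_mult:
  fixes f g :: "real \<Rightarrow> 'a::real_normed_field"
  shows "smooth_net f \<Longrightarrow> smooth_net g \<Longrightarrow> smooth_net (\<lambda>e. f e * g e)"
  by (rule TG_smooth, rule TG.mult; rule TG.base)

lemma smooth_uminus: "smooth_net f \<Longrightarrow> smooth_net (\<lambda>e. - f e)"
  using smooth_linear[of "\<lambda>x. - x" f] bounded_linear_minus[OF bounded_linear_ident] by simp

inductive_set TR :: "(real \<Rightarrow> real) set" where
  base: "smooth_net f \<Longrightarrow> f \<in> TR"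
| add: "f \<in> TR \<Longrightarrow> g \<in> TR \<Longrightarrow> (\<lambda>e. f e + g e) \<in> TR"
| mult: "f \<in> TR \<Longrightarrow> g \<in> TR \<Longrightarrow> (\<lambda>e. f e * g e) \<in> TR"
| inv: "f \<in> TR \<Longrightarrow> (\<forall>e\<in>Iset. f e \<noteq> 0) \<Longrightarrow> (\<lambda>e. inverse (f e)) \<in> TR"
| sqrt: "f \<in> TR \<Longrightarrow> (\<forall>e\<in>Iset. f e > 0) \<Longrightarrow> (\<lambda>e. sqrt (f e)) \<in> TR"
| exp: "f \<in> TR \<Longrightarrow> (\<lambda>e. exp (f e)) \<in> TR"

lemma dI_real: "dI f f' \<longleftrightarrow> (\<forall>e\<in>Iset. (f has_field_derivative f' e) (at e within Iset))"
  for f :: "real \<Rightarrow> real"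
  by (simp add: dI_def has_real_derivative_iff_has_vector_derivative)

lemma TR_deriv: "f \<in> TR \<Longrightarrow> \<exists>f'. dI f f' \<and> f' \<in> TR"
proof (induction rule: TR.induct)
  case (base f) then show ?case using smooth_deriv TR.base by blast
next
  case (add f g)
  then obtain f' g' where d: "dI f f'" "f' \<in> TR" "dI g g'" "g' \<in> TR" by blast
  have "(\<lambda>e. f' e + g' e) \<in> TR" by (rule TR.add[OF d(2) d(4)])
  moreover have "dI (\<lambda>e. f e + g e) (\<lambda>e. f' e + g' e)"
    using d(1,3) unfolding dI_def by (auto intro: has_vector_derivative_add)
  ultimately show ?case by blast
next
  case (mult f g)
  then obtain f' g' where d: "dI f f'" "f' \<in> TR" "dI g g'" "g' \<in> TR" by blast
  have "(\<lambda>e. f e * g' e + f' e * g e) \<in> TR"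
    by (rule TR.add[OF TR.mult[OF mult(1) d(4)] TR.mult[OF d(2) mult(2)]])
  moreover have "dI (\<lambda>e. f e * g e) (\<lambda>e. f e * g' e + f' e * g e)"
    using d(1,3) unfolding dI_def by (auto intro: has_vector_derivative_mult)
  ultimately show ?case by blast
next
  case (inv f)
  then obtain f' where f': "dI f f'" "f' \<in> TR" by blast
  have "(\<lambda>e. - 1) \<in> TR" by (rule TR.base[OF smooth_const])
  then have "(\<lambda>e. (- 1) * (inverse (f e) * f' e * inverse (f e))) \<in> TR"
    using inv f' by (intro TR.mult TR.inv) auto
  moreover have "dI (\<lambda>e. inverse (f e)) (\<lambda>e. (- 1) * (inverse (f e) * f' e * inverse (f e)))"
    using f'(1) inv unfolding dI_real by (auto intro!: derivative_eq_intros)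
  ultimately show ?case by blast
next
  case (sqrt f)
  then obtain f' where f': "dI f f'" "f' \<in> TR" by blast
  have A: "(\<lambda>e. 2 * sqrt (f e)) \<in> TR" using sqrt by (intro TR.mult TR.sqrt TR.base[OF smooth_const])
  have B: "(\<lambda>e. inverse (2 * sqrt (f e))) \<in> TR" by (rule TR.inv[OF A]) (use sqrt in auto)
  have "(\<lambda>e. f' e * inverse (2 * sqrt (f e))) \<in> TR" by (rule TR.mult[OF f'(2) B])
  moreover have "dI (\<lambda>e. sqrt (f e)) (\<lambda>e. f' e * inverse (2 * sqrt (f e)))"
    using f'(1) sqrt unfolding dI_real by (auto intro!: derivative_eq_intros simp: field_simps)
  ultimately show ?case by blast
next
  case (exp f)
  then obtain f' where f': "dI f f'" "f' \<in> TR" by blast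
  have "(\<lambda>e. exp (f e) * f' e) \<in> TR" using exp f' by (intro TR.mult TR.exp)
  moreover have "dI (\<lambda>e. exp (f e)) (\<lambda>e. exp (f e) * f' e)"
    using f'(1) unfolding dI_real by (auto intro!: derivative_eq_intros)
  ultimately show ?case by blast
qed

lemma TR_smooth: "f \<in> TR \<Longrightarrow> smooth_net f"
  by (rule smooth_coind[where P="\<lambda>f. f \<in> TR"]) (use TR_deriv in blast)+



lemma smooth_diff:
  fixes f g :: "real \<Rightarrow> 'a::real_normed_field"
  shows "smooth_net f \<Longrightarrow> smooth_net g \<Longrightarrow> smooth_net (\<lambda>e. f e - g e)"
  using smooth_add[of f "\<lambda>e. - g e"] smooth_uminus[of g] by simp

lemma negl_diff: "negl f \<Longrightarrow> negl g \<Longrightarrow> negl (\<lambda>e. f e - g e)"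
  using negl_add[of f "\<lambda>e. - g e"] negl_uminus[of g] by simp

lemma negl_transfer: "negl (\<lambda>e. f e - g e) \<Longrightarrow> negl g \<Longrightarrow> negl f"
  using negl_add[of "\<lambda>e. f e - g e" g] by simp

lemma EMsm_alg: "netalg (EM_sm :: (real \<Rightarrow> 'a::real_normed_field) set)"
  by unfold_locales
    (auto simp: EM_sm_def moderate_iff intro: smooth_add smooth_mult smooth_uminus smooth_const
      modr_add modr_mult modr_uminus modr_const)

lemma Nsm_sub: "N_sm \<subseteq> EM_sm"
  by (auto simp: N_sm_def EM_sm_def moderate_iff negligible_iff intro: negl_modr)

lemma Nsm_ideal: "ideal (N_sm :: (real \<Rightarrow> 'a::real_normed_field) set) (net_ring EM_sm)"
  by (rule netalg.ideal[OF EMsm_alg Nsm_sub])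
    (auto simp: N_sm_def EM_sm_def moderate_iff negligible_iff intro: smooth_add smooth_mult smooth_uminus smooth_const
      negl_add negl_mult negl_uminus negl_zero)

lemma Ksm_cring: "cring (Ksm :: (real \<Rightarrow> 'a::real_normed_field) set ring)"
  unfolding Ksm_def by (rule ideal.quotient_is_cring[OF Nsm_ideal netalg.cring[OF EMsm_alg]])

lemma Ksm_hom: "ring_hom_cring (net_ring EM_sm) (Ksm :: (real \<Rightarrow> 'a::real_normed_field) set ring)
   (a_r_coset (net_ring EM_sm) N_sm)"
  unfolding Ksm_def by (rule ideal.rcos_ring_hom_cring[OF Nsm_ideal netalg.cring[OF EMsm_alg]])

lemma rcos_eq: "a_r_coset (net_ring A) H f = (\<lambda>h e. h e + f e) ` H"
  by (auto simp: a_r_coset_def r_coset_def net_ring_def)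

lemma carrier_Ksm: "carrier (Ksm :: (real \<Rightarrow> 'a::real_normed_field) set ring) =
   (\<lambda>f. a_r_coset (net_ring EM_sm) N_sm f) ` EM_sm"
  unfolding Ksm_def FactRing_def A_RCOSETS_def' by auto

lemma zero_Ksm: "\<zero>\<^bsub>Ksm\<^esub> = N_sm"
  unfolding Ksm_def FactRing_def by simp

lemma coset_eq_iff:
  assumes z: "(\<lambda>_. 0) \<in> N" and ad: "\<And>f g. f \<in> N \<Longrightarrow> g \<in> N \<Longrightarrow> (\<lambda>e. f e + g e) \<in> N"
    and un: "\<And>f. f \<in> N \<Longrightarrow> (\<lambda>e. - f e) \<in> N"
  shows "(\<lambda>h e. h e + f e) ` N = (\<lambda>h e. h e + g e) ` N \<longleftrightarrow> (\<lambda>e. f e - g e) \<in> (N :: (real \<Rightarrow> 'a::ab_group_add) set)"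
proof
  assume eq: "(\<lambda>h e. h e + f e) ` N = (\<lambda>h e. h e + g e) ` N"
  have "f \<in> (\<lambda>h e. h e + f e) ` N" using z by (auto intro!: image_eqI[of _ _ "\<lambda>_. 0"])
  then obtain h where "h \<in> N" "f = (\<lambda>e. h e + g e)" using eq by auto
  then show "(\<lambda>e. f e - g e) \<in> N" by simp
next
  assume d: "(\<lambda>e. f e - g e) \<in> N"
  have 1: "(\<lambda>h e. h e + f e) ` N \<subseteq> (\<lambda>h e. h e + g e) ` N" if d: "(\<lambda>e. f e - g e) \<in> N" for f g
  proof
    fix x assume "x \<in> (\<lambda>h e. h e + f e) ` N"
    then obtain h where h: "h \<in> N" "x = (\<lambda>e. h e + f e)" by auto
    have "(\<lambda>e. h e + (f e - g e)) \<in> N" using ad[OF h(1) d] by simp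
    moreover have "x = (\<lambda>e. (h e + (f e - g e)) + g e)" using h by (auto simp: algebra_simps)
    ultimately show "x \<in> (\<lambda>h e. h e + g e) ` N"
      by (intro image_eqI[of _ _ "\<lambda>e. h e + (f e - g e)"]) auto
  qed
  have "(\<lambda>e. g e - f e) \<in> N" using un[OF d] by simp
  then show "(\<lambda>h e. h e + f e) ` N = (\<lambda>h e. h e + g e) ` N" using 1[OF d] 1 by blast
qed

lemma Nsm_cl:
  "(\<lambda>_. 0) \<in> (N_sm :: (real \<Rightarrow> 'a::real_normed_field) set)"
  "\<And>f g. f \<in> (N_sm :: (real \<Rightarrow> 'a::real_normed_field) set) \<Longrightarrow> g \<in> N_sm \<Longrightarrow> (\<lambda>e. f e + g e) \<in> N_sm"
  "\<And>f. f \<in> (N_sm :: (real \<Rightarrow> 'a::real_normed_field) set) \<Longrightarrow> (\<lambda>e. - f e) \<in> N_sm"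
    apply (simp add: N_sm_def negligible_iff smooth_const negl_zero)
   apply (simp add: N_sm_def negligible_iff smooth_add negl_add)
  apply (simp add: N_sm_def negligible_iff smooth_uminus negl_uminus)
  done

lemma Nco_cl:
  "(\<lambda>_. 0) \<in> (N_co :: (real \<Rightarrow> 'a::real_normed_field) set)"
  "\<And>f g. f \<in> (N_co :: (real \<Rightarrow> 'a::real_normed_field) set) \<Longrightarrow> g \<in> N_co \<Longrightarrow> (\<lambda>e. f e + g e) \<in> N_co"
  "\<And>f. f \<in> (N_co :: (real \<Rightarrow> 'a::real_normed_field) set) \<Longrightarrow> (\<lambda>e. - f e) \<in> N_co"
    apply (simp add: N_co_def cont_net_def negligible_iff negl_zero)
   apply (simp add: N_co_def cont_net_def negligible_iff continuous_on_add negl_add)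
  apply (simp add: N_co_def cont_net_def negligible_iff continuous_on_minus negl_uminus)
  done

lemma Nsm_zero_iff: "f \<in> EM_sm \<Longrightarrow> (a_r_coset (net_ring EM_sm) N_sm f = N_sm \<longleftrightarrow> f \<in> (N_sm :: (real \<Rightarrow> 'a::real_normed_field) set))"
proof -
  have 1: "(\<lambda>h e. h e + (0::'a)) ` N_sm = N_sm" by simp
  have "(\<lambda>h e. h e + f e) ` N_sm = (\<lambda>h e. h e + (\<lambda>_. 0::'a) e) ` N_sm \<longleftrightarrow> (\<lambda>e. f e - (\<lambda>_. 0) e) \<in> N_sm"
    by (rule coset_eq_iff[OF Nsm_cl])
  then show ?thesis unfolding rcos_eq 1 by simp
qed

lemma co_class_eq: "co_class f = co_class g \<longleftrightarrow> (\<lambda>e. f e - g e) \<in> (N_co :: (real \<Rightarrow> 'a::real_normed_field) set)"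
  unfolding co_class_def rcos_eq by (rule coset_eq_iff[OF Nco_cl])

lemma sm_coset_eq: "a_r_coset (net_ring EM_sm) N_sm f = a_r_coset (net_ring EM_sm) N_sm g \<longleftrightarrow>
    (\<lambda>e. f e - g e) \<in> (N_sm :: (real \<Rightarrow> 'a::real_normed_field) set)"
  unfolding rcos_eq by (rule coset_eq_iff[OF Nsm_cl])

lemma Nsm_Nco: "N_sm \<subseteq> N_co"
  by (auto simp: N_sm_def N_co_def cont_net_def intro: smooth_cont)

lemma rep_in: "(SOME p. p \<in> a_r_coset (net_ring EM_sm) N_sm f) \<in> a_r_coset (net_ring EM_sm) N_sm (f :: real \<Rightarrow> 'a::real_normed_field)"
proof -
  have "f \<in> a_r_coset (net_ring EM_sm) N_sm f" unfolding rcos_eq using Nsm_cl(1)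
    by (auto intro!: image_eqI[of _ _ "\<lambda>_. 0"])
  then show ?thesis by (rule someI[where P="\<lambda>p. p \<in> a_r_coset (net_ring EM_sm) N_sm f"])
qed

lemma rep_prop:
  assumes "f \<in> EM_sm"
  defines "p \<equiv> SOME p. p \<in> a_r_coset (net_ring EM_sm) N_sm (f :: real \<Rightarrow> 'a::real_normed_field)"
  shows "p \<in> EM_sm" "(\<lambda>e. p e - f e) \<in> N_sm"
    "a_r_coset (net_ring EM_sm) N_sm p = a_r_coset (net_ring EM_sm) N_sm f"
proof -
  obtain h where h: "h \<in> N_sm" "p = (\<lambda>e. h e + f e)" using rep_in[of f] unfolding p_def rcos_eq by auto
  show "(\<lambda>e. p e - f e) \<in> N_sm" using h by simp
  then show "a_r_coset (net_ring EM_sm) N_sm p = a_r_coset (net_ring EM_sm) N_sm f"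
    using sm_coset_eq by blast
  show "p \<in> EM_sm" using h assms Nsm_sub netalg.add_cl[OF EMsm_alg] by blast
qed

lemma tau_eq:
  assumes "f \<in> EM_sm"
  shows "tau_sm (a_r_coset (net_ring EM_sm) N_sm f) = co_class (f :: real \<Rightarrow> 'a::real_normed_field)"
  unfolding tau_sm_def co_class_eq using rep_prop(2)[OF assms] Nsm_Nco by blast

lemma tau_inj: "inj_on tau_sm (carrier (Ksm :: (real \<Rightarrow> 'a::real_normed_field) set ring))"
proof (rule inj_onI)
  fix x y :: "(real \<Rightarrow> 'a) set"
  assume "x \<in> carrier Ksm" "y \<in> carrier Ksm" and eq: "tau_sm x = tau_sm y"
  then obtain f g where fg: "f \<in> EM_sm" "g \<in> EM_sm" "x = a_r_coset (net_ring EM_sm) N_sm f"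
    "y = a_r_coset (net_ring EM_sm) N_sm g" unfolding carrier_Ksm by auto
  then have "(\<lambda>e. f e - g e) \<in> N_co" using eq tau_eq co_class_eq by metis
  moreover have "smooth_net (\<lambda>e. f e - g e)" using fg by (auto simp: EM_sm_def intro: smooth_diff)
  ultimately have "(\<lambda>e. f e - g e) \<in> N_sm" by (auto simp: N_sm_def N_co_def)
  then show "x = y" using fg sm_coset_eq by blast
qed

lemma inv_tau:
  assumes "f \<in> EM_sm" "continuous_on Iset (\<lambda>e. g e - f e)" "negl (\<lambda>e. g e - f e)"
  shows "inv_into (carrier Ksm) tau_sm (co_class g) = a_r_coset (net_ring EM_sm) N_sm (f :: real \<Rightarrow> 'a::real_normed_field)"
proof -
  have "co_class g = co_class f" unfolding co_class_eq using assms(2,3)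
    by (auto simp: N_co_def cont_net_def negligible_iff)
  also have "\<dots> = tau_sm (a_r_coset (net_ring EM_sm) N_sm f)" using tau_eq[OF assms(1)] by simp
  finally show ?thesis using inv_into_f_f[OF tau_inj] assms(1) carrier_Ksm by auto
qed



lemma TR_const: "(\<lambda>_. c) \<in> TR" by (rule TR.base[OF smooth_const])

lemma TR_diff: "f \<in> TR \<Longrightarrow> g \<in> TR \<Longrightarrow> (\<lambda>e. f e - g e) \<in> TR"
proof -
  assume "f \<in> TR" "g \<in> TR"
  then have "(\<lambda>e. f e + (- 1) * g e) \<in> TR" by (intro TR.add TR.mult TR_const)
  then show ?thesis by simp
qed

lemma E_TR: "(\<lambda>e::real. exp (- 1 / e)) \<in> TR"
proof -
  have "(\<lambda>e::real. inverse e) \<in> TR" by (rule TR.inv[OF TR.base[OF smooth_id]]) auto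
  then have "(\<lambda>e::real. exp ((- 1) * inverse e)) \<in> TR" by (intro TR.exp TR.mult TR_const)
  then show ?thesis by (simp add: divide_inverse)
qed

lemma E_pos: "0 < exp (- 1 / (e::real))" by simp

lemma sqrt_bound:
  fixes x E :: real
  assumes "0 \<le> x" "0 \<le> E"
  shows "x \<le> sqrt (x\<^sup>2 + E\<^sup>2)" "sqrt (x\<^sup>2 + E\<^sup>2) \<le> x + E"
proof -
  have "x = sqrt (x\<^sup>2)" using assms by simp
  also have "\<dots> \<le> sqrt (x\<^sup>2 + E\<^sup>2)" by (intro real_sqrt_le_mono) simp
  finally show "x \<le> sqrt (x\<^sup>2 + E\<^sup>2)" .
  have "x\<^sup>2 + E\<^sup>2 \<le> (x + E)\<^sup>2" using assms by (simp add: power2_sum)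
  then have "sqrt (x\<^sup>2 + E\<^sup>2) \<le> sqrt ((x + E)\<^sup>2)" by (rule real_sqrt_le_mono)
  also have "\<dots> = x + E" using assms by simp
  finally show "sqrt (x\<^sup>2 + E\<^sup>2) \<le> x + E" .
qed

lemma key_ineq:
  fixes a b s :: real
  assumes "0 \<le> a" "0 \<le> b" "0 < s" "a * b \<le> s\<^sup>2"
  shows "a * b\<^sup>2 \<le> s * (a\<^sup>2 + b\<^sup>2 + s\<^sup>2)"
proof -
  have "a * b\<^sup>2 = (a * b) * b" by (simp add: power2_eq_square)
  also have "\<dots> \<le> s\<^sup>2 * b" using assms by (intro mult_right_mono) auto
  also have "\<dots> \<le> s * (b\<^sup>2 + s\<^sup>2)"
  proof -
    have "s * b \<le> b\<^sup>2 + s\<^sup>2"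
    proof -
      have "0 \<le> (b - s)\<^sup>2" by simp
      then have "2 * s * b \<le> b\<^sup>2 + s\<^sup>2" by (simp add: power2_diff mult.commute mult.left_commute)
      moreover have "s * b \<le> 2 * s * b" using assms by simp
      ultimately show ?thesis by linarith
    qed
    then have "s * (s * b) \<le> s * (b\<^sup>2 + s\<^sup>2)" using assms by (intro mult_left_mono) auto
    then show ?thesis by (simp add: power2_eq_square mult.assoc)
  qed
  also have "\<dots> \<le> s * (a\<^sup>2 + b\<^sup>2 + s\<^sup>2)" using assms by (intro mult_left_mono) auto
  finally show ?thesis .
qed

lemma min_sqrt: "0 \<le> x \<Longrightarrow> 0 \<le> y \<Longrightarrow> min x y \<le> sqrt (x * (y::real))"
proof -
  assume xy: "0 \<le> x" "0 \<le> y"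
  have "min x y = sqrt (min x y * min x y)" using xy by simp
  also have "\<dots> \<le> sqrt (x * y)" using xy by (intro real_sqrt_le_mono mult_mono) auto
  finally show ?thesis .
qed

lemma min_lip: "\<bar>min a b - min c (d::real)\<bar> \<le> \<bar>a - c\<bar> + \<bar>b - d\<bar>"
  by (auto simp: min_def)

lemma EM_real_norm: "p \<in> EM_sm \<Longrightarrow> modr (\<lambda>e. norm (p e))"
  by (rule modr_le[where K=1 and f=p]) (auto simp: EM_sm_def moderate_iff)

lemma gabs_prop:
  assumes nsq: "\<And>f::real \<Rightarrow> 'a::real_normed_field. smooth_net f \<Longrightarrow> smooth_net (\<lambda>e. (norm (f e))\<^sup>2)"
    and r: "r \<in> carrier (Ksm :: (real \<Rightarrow> 'a) set ring)"
  obtains p a where "p \<in> EM_sm" "r = a_r_coset (net_ring EM_sm) N_sm p" "a \<in> EM_sm"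
    "gabs r = a_r_coset (net_ring EM_sm) N_sm a" "negl (\<lambda>e. a e - norm (p e))"
proof -
  obtain f where f: "f \<in> EM_sm" "r = a_r_coset (net_ring EM_sm) N_sm f" using r carrier_Ksm by auto
  define p where "p = (SOME p. p \<in> r)"
  have p: "p \<in> EM_sm" "a_r_coset (net_ring EM_sm) N_sm p = r"
    using rep_prop(1,3)[OF f(1)] unfolding p_def f(2) by auto
  define E where "E = (\<lambda>e::real. exp (- 1 / e))"
  define a where "a = (\<lambda>e. sqrt ((norm (p e))\<^sup>2 + E e * E e))"
  have Epos: "0 < E e" for e unfolding E_def by simp
  have psm: "smooth_net p" using p(1) by (simp add: EM_sm_def)
  have ETR: "E \<in> TR" unfolding E_def by (rule E_TR)
  have "a \<in> TR" unfolding a_def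
    by (rule TR.sqrt[OF TR.add[OF TR.base[OF nsq[OF psm]] TR.mult[OF ETR ETR]]]) (use Epos in \<open>auto intro: add_nonneg_pos\<close>)
  then have asm: "smooth_net a" by (rule TR_smooth)
  have bnd: "\<bar>a e - norm (p e)\<bar> \<le> E e" for e
  proof -
    have "E e * E e = (E e)\<^sup>2" by (simp add: power2_eq_square)
    then show ?thesis unfolding a_def using sqrt_bound[of "norm (p e)" "E e"] Epos[of e] by auto
  qed
  have Eabs: "\<bar>E e\<bar> = E e" for e using Epos[of e] by simp
  have negE: "negl E" unfolding E_def by (rule negl_exp)
  have M: "modr (\<lambda>e. norm (p e) + E e)" by (rule modr_add[OF EM_real_norm[OF p(1)] negl_modr[OF negE]])
  have B: "\<forall>e. norm (a e) \<le> 1 * norm (norm (p e) + E e)"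
  proof
    fix e
    have "0 \<le> a e" unfolding a_def by simp
    then show "norm (a e) \<le> 1 * norm (norm (p e) + E e)"
      using bnd[of e] Epos[of e] norm_ge_zero[of "p e"] by (simp add: abs_le_iff)
  qed
  have "modr a" by (rule modr_le[where K=1, OF M]) (use B in \<open>auto intro!: always_eventually\<close>)
  then have aEM: "a \<in> EM_sm" using asm by (simp add: EM_sm_def moderate_iff)
  have ng: "negl (\<lambda>e. a e - norm (p e))"
    by (rule negl_le[where K=1, OF negE]) (use bnd in \<open>auto intro!: always_eventually simp: Eabs\<close>)
  have ng2: "negl (\<lambda>e. norm (p e) - a e)"
    by (rule negl_le[where K=1, OF negE]) (use bnd in \<open>auto intro!: always_eventually simp: Eabs abs_minus_commute\<close>)
  have ct: "continuous_on Iset (\<lambda>e. norm (p e) - a e)"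
    using smooth_cont[OF psm] smooth_cont[OF asm] by (intro continuous_on_diff continuous_on_norm)
  have "gabs r = a_r_coset (net_ring EM_sm) N_sm a"
    unfolding gabs_def p_def[symmetric] by (rule inv_tau[OF aEM ct ng2])
  then show ?thesis by (rule that[OF p(1) p(2)[symmetric] aEM _ ng])
qed

lemma w_bounds:
  fixes x y E :: real
  assumes E: "0 < E"
  shows "\<bar>(1/2) * ((x + y) - sqrt ((x - y) * (x - y) + E * E)) - min x y\<bar> \<le> E"
    "\<bar>(1/2) * ((x + y) - sqrt ((x - y) * (x - y) + E * E))\<bar> \<le> \<bar>x\<bar> + \<bar>y\<bar> + E"
proof -
  define D where "D = \<bar>x - y\<bar>"
  define S where "S = sqrt ((x - y) * (x - y) + E * E)"
  have SD: "S = sqrt (D\<^sup>2 + E\<^sup>2)" unfolding S_def D_def by (simp add: power2_eq_square)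
  have D0: "0 \<le> D" unfolding D_def by simp
  have b1: "D \<le> S" "S \<le> D + E" unfolding SD using sqrt_bound[OF D0, of E] E by auto
  have mn: "min x y = (x + y - D) / 2" unfolding D_def by (auto simp: min_def abs_if)
  have b2: "D \<le> \<bar>x\<bar> + \<bar>y\<bar>" unfolding D_def by linarith
  have b3: "\<bar>x + y\<bar> \<le> \<bar>x\<bar> + \<bar>y\<bar>" by linarith
  show "\<bar>(1/2) * ((x + y) - sqrt ((x - y) * (x - y) + E * E)) - min x y\<bar> \<le> E"
    unfolding S_def[symmetric] mn using b1 E by (simp add: abs_le_iff field_simps)
  show "\<bar>(1/2) * ((x + y) - sqrt ((x - y) * (x - y) + E * E))\<bar> \<le> \<bar>x\<bar> + \<bar>y\<bar> + E"
    unfolding S_def[symmetric] using b1 b2 b3 E D0 by (simp add: abs_le_iff)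
qed

lemma negl_abs: "negl f \<Longrightarrow> negl (\<lambda>e. \<bar>f e :: real\<bar>)"
  by (rule negl_le[where K=1]) auto

lemma Nsm_negl: "f \<in> N_sm \<Longrightarrow> negl f"
  by (simp add: N_sm_def negligible_iff)

lemma gwedge_prop:
  assumes a: "a \<in> EM_sm" and b: "b \<in> EM_sm"
  obtains w where "w \<in> EM_sm"
    "gwedge (a_r_coset (net_ring EM_sm) N_sm a) (a_r_coset (net_ring EM_sm) N_sm b) = a_r_coset (net_ring EM_sm) N_sm w"
    "negl (\<lambda>e. w e - min (a e) (b e))"
proof -
  define a1 where "a1 = (SOME p. p \<in> a_r_coset (net_ring EM_sm) N_sm a)"
  define b1 where "b1 = (SOME p. p \<in> a_r_coset (net_ring EM_sm) N_sm b)"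
  have a1: "a1 \<in> EM_sm" "(\<lambda>e. a1 e - a e) \<in> N_sm" using rep_prop[OF a] unfolding a1_def by auto
  have b1: "b1 \<in> EM_sm" "(\<lambda>e. b1 e - b e) \<in> N_sm" using rep_prop[OF b] unfolding b1_def by auto
  define E where "E = (\<lambda>e::real. exp (- 1 / e))"
  have Epos: "0 < E e" for e unfolding E_def by simp
  have Eabs: "\<bar>E e\<bar> = E e" for e using Epos[of e] by simp
  have ETR: "E \<in> TR" unfolding E_def by (rule E_TR)
  have negE: "negl E" unfolding E_def by (rule negl_exp)
  define w where "w = (\<lambda>e. (1/2) * ((a1 e + b1 e) - sqrt ((a1 e - b1 e) * (a1 e - b1 e) + E e * E e)))"
  have a1T: "a1 \<in> TR" "b1 \<in> TR" using a1 b1 by (auto simp: EM_sm_def intro: TR.base)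
  have dT: "(\<lambda>e. a1 e - b1 e) \<in> TR" by (rule TR_diff[OF a1T])
  have sT: "(\<lambda>e. sqrt ((a1 e - b1 e) * (a1 e - b1 e) + E e * E e)) \<in> TR"
    by (rule TR.sqrt[OF TR.add[OF TR.mult[OF dT dT] TR.mult[OF ETR ETR]]])
      (use Epos in \<open>auto intro: add_nonneg_pos\<close>)
  have "w \<in> TR" unfolding w_def
    by (rule TR.mult[OF TR_const TR_diff[OF TR.add[OF a1T] sT]])
  then have wsm: "smooth_net w" by (rule TR_smooth)
  have bw: "\<bar>w e - min (a1 e) (b1 e)\<bar> \<le> E e" "\<bar>w e\<bar> \<le> \<bar>a1 e\<bar> + \<bar>b1 e\<bar> + E e" for e
    unfolding w_def using w_bounds[OF Epos[of e], of "a1 e" "b1 e"] by auto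
  have ma: "modr (\<lambda>e. \<bar>a1 e\<bar> + \<bar>b1 e\<bar> + E e)"
    using a1(1) b1(1) EM_real_norm[of a1] EM_real_norm[of b1]
    by (intro modr_add negl_modr[OF negE]) auto
  have "modr w"
  proof (rule modr_le[where K=1, OF ma], rule always_eventually, rule allI)
    fix e
    have "0 \<le> \<bar>a1 e\<bar> + \<bar>b1 e\<bar> + E e" using Epos[of e] by simp
    then show "norm (w e) \<le> 1 * norm (\<bar>a1 e\<bar> + \<bar>b1 e\<bar> + E e)" using bw(2)[of e] by simp
  qed
  then have wEM: "w \<in> EM_sm" using wsm by (simp add: EM_sm_def moderate_iff)
  have n1: "negl (\<lambda>e. min (a1 e) (b1 e) - w e)"
    by (rule negl_le[where K=1, OF negE]) (use bw in \<open>auto intro!: always_eventually simp: Eabs abs_minus_commute\<close>)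
  have ct: "continuous_on Iset (\<lambda>e. min (a1 e) (b1 e) - w e)"
    using smooth_cont[of a1] smooth_cont[of b1] smooth_cont[OF wsm] a1(1) b1(1)
    by (intro continuous_on_diff continuous_on_min) (auto simp: EM_sm_def)
  have g: "gwedge (a_r_coset (net_ring EM_sm) N_sm a) (a_r_coset (net_ring EM_sm) N_sm b) = a_r_coset (net_ring EM_sm) N_sm w"
    unfolding gwedge_def a1_def[symmetric] b1_def[symmetric] by (rule inv_tau[OF wEM ct n1])
  have n2: "negl (\<lambda>e. w e - min (a1 e) (b1 e))"
    by (rule negl_le[where K=1, OF negE]) (use bw in \<open>auto intro!: always_eventually simp: Eabs\<close>)
  have n3: "negl (\<lambda>e. \<bar>a1 e - a e\<bar> + \<bar>b1 e - b e\<bar>)"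
    by (rule negl_add[OF negl_abs negl_abs]) (use a1(2) b1(2) Nsm_negl in auto)
  have n4: "negl (\<lambda>e. min (a1 e) (b1 e) - min (a e) (b e))"
    by (rule negl_le[where K=1, OF n3]) (auto intro!: always_eventually simp: min_lip)
  have "negl (\<lambda>e. w e - min (a e) (b e))"
    using negl_add[OF n2 n4] by simp
  then show ?thesis using that wEM g by blast
qed

lemma prod_le_min: "0 \<le> x \<Longrightarrow> 0 \<le> y \<Longrightarrow> x * y \<le> min x y * (x + (y::real))"
proof -
  assume xy: "0 \<le> x" "0 \<le> y"
  show ?thesis
  proof (cases "x \<le> y")
    case True
    then have "x * y \<le> x * (x + y)" using xy by (intro mult_left_mono) auto
    then show ?thesis using True by (simp add: min_def)
  next
    case False
    then have "y * x \<le> y * (x + y)" using xy by (intro mult_left_mono) auto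
    then show ?thesis using False by (simp add: min_def mult.commute)
  qed
qed

lemma negl_prod_min:
  fixes p q :: "real \<Rightarrow> 'a::real_normed_field"
  assumes p: "modr p" and q: "modr q"
  shows "negl (\<lambda>e. p e * q e) \<longleftrightarrow> negl (\<lambda>e. min (norm (p e)) (norm (q e)))"
proof
  assume n: "negl (\<lambda>e. p e * q e)"
  have "negl (\<lambda>e. norm (p e * q e))" by (rule negl_le[where K=1, OF n]) auto
  then have n2: "negl (\<lambda>e. sqrt \<bar>norm (p e * q e)\<bar>)" by (rule negl_sqrt)
  show "negl (\<lambda>e. min (norm (p e)) (norm (q e)))"
  proof (rule negl_le[where K=1, OF n2], rule always_eventually, rule allI)
    fix e
    have "min (norm (p e)) (norm (q e)) \<le> sqrt (norm (p e) * norm (q e))" by (rule min_sqrt) auto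
    then show "norm (min (norm (p e)) (norm (q e))) \<le> 1 * norm (sqrt \<bar>norm (p e * q e)\<bar>)"
      by (simp add: norm_mult)
  qed
next
  assume n: "negl (\<lambda>e. min (norm (p e)) (norm (q e)))"
  have m: "modr (\<lambda>e. norm (p e) + norm (q e))"
    by (rule modr_add[OF modr_le[where K=1, OF p] modr_le[where K=1, OF q]]) auto
  have n2: "negl (\<lambda>e. (norm (p e) + norm (q e)) * min (norm (p e)) (norm (q e)))"
    by (rule negl_mult[OF n m])
  show "negl (\<lambda>e. p e * q e)"
  proof (rule negl_le[where K=1, OF n2], rule always_eventually, rule allI)
    fix e
    have "norm (p e) * norm (q e) \<le> min (norm (p e)) (norm (q e)) * (norm (p e) + norm (q e))"
      by (rule prod_le_min) auto
    then show "norm (p e * q e) \<le> 1 * norm ((norm (p e) + norm (q e)) * min (norm (p e)) (norm (q e)))"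
      by (simp add: norm_mult mult.commute)
  qed
qed

lemma x_constr:
  fixes p q :: "real \<Rightarrow> 'a::real_normed_field"
  assumes nsq: "\<And>f::real \<Rightarrow> 'a. smooth_net f \<Longrightarrow> smooth_net (\<lambda>e. (norm (f e))\<^sup>2)"
    and p: "p \<in> EM_sm" and q: "q \<in> EM_sm" and n: "negl (\<lambda>e. p e * q e)"
  obtains xr :: "real \<Rightarrow> real" where "smooth_net xr" "\<And>e. 0 \<le> xr e \<and> xr e \<le> 1"
    "negl (\<lambda>e. p e * of_real (xr e))" "negl (\<lambda>e. q e * (1 - of_real (xr e)))"
proof -
  define E where "E = (\<lambda>e::real. exp (- 1 / e))"
  have Epos: "0 < E e" for e unfolding E_def by simp
  have ETR: "E \<in> TR" unfolding E_def by (rule E_TR)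
  have negE: "negl E" unfolding E_def by (rule negl_exp)
  define R where "R = (\<lambda>e. (norm (p e))\<^sup>2)"
  define S where "S = (\<lambda>e. (norm (q e))\<^sup>2)"
  define d where "d = (\<lambda>e. sqrt (R e * S e + E e * E e))"
  define s where "s = (\<lambda>e. sqrt (d e))"
  define xr where "xr = (\<lambda>e. S e * inverse (R e + S e + d e))"
  have RT: "R \<in> TR" "S \<in> TR" unfolding R_def S_def using p q nsq
    by (auto simp: EM_sm_def intro!: TR.base)
  have R0: "0 \<le> R e" "0 \<le> S e" for e unfolding R_def S_def by auto
  have dpos: "0 < d e" for e unfolding d_def using Epos[of e] R0[of e]
    by (intro real_sqrt_gt_zero add_nonneg_pos) auto
  have dT: "d \<in> TR" unfolding d_def
    by (rule TR.sqrt[OF TR.add[OF TR.mult[OF RT] TR.mult[OF ETR ETR]]])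
      (use Epos R0 in \<open>auto intro: add_nonneg_pos\<close>)
  have Dpos: "0 < R e + S e + d e" for e using R0[of e] dpos[of e] by linarith
  have xT: "xr \<in> TR" unfolding xr_def
    by (rule TR.mult[OF RT(2) TR.inv[OF TR.add[OF TR.add[OF RT] dT]]]) (metis Dpos less_irrefl)
  have xsm: "smooth_net xr" by (rule TR_smooth[OF xT])
  have xeq: "xr e = S e / (R e + S e + d e)" for e unfolding xr_def by (simp add: divide_inverse)
  have x01: "0 \<le> xr e \<and> xr e \<le> 1" for e
    unfolding xeq using R0[of e] Dpos[of e] dpos[of e] by (auto simp: divide_le_eq_1_pos)
  have sq: "(s e)\<^sup>2 = d e" for e unfolding s_def using dpos[of e] by simp
  have spos: "0 < s e" for e unfolding s_def using dpos[of e] by simp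
  have ab: "norm (p e) * norm (q e) \<le> (s e)\<^sup>2" for e
  proof -
    have "norm (p e) * norm (q e) = sqrt (R e * S e)"
      unfolding R_def S_def by (simp add: real_sqrt_mult)
    also have "\<dots> \<le> d e" unfolding d_def by (intro real_sqrt_le_mono) (simp add: Epos less_imp_le)
    finally show ?thesis using sq by simp
  qed
  have Dform: "R e + S e + d e = (norm (p e))\<^sup>2 + (norm (q e))\<^sup>2 + (s e)\<^sup>2" for e
    unfolding R_def S_def sq by simp
  have b1: "norm (p e * of_real (xr e)) \<le> 1 * norm (s e)" for e
  proof -
    have k: "norm (p e) * (norm (q e))\<^sup>2 \<le> s e * (R e + S e + d e)"
      unfolding Dform by (rule key_ineq) (use spos ab in auto)
    have "norm (p e * of_real (xr e)) = norm (p e) * xr e" using x01[of e] by (simp add: norm_mult)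
    also have "\<dots> = norm (p e) * (norm (q e))\<^sup>2 / (R e + S e + d e)" unfolding xeq S_def by simp
    also have "\<dots> \<le> s e" using k Dpos[of e] by (simp add: pos_divide_le_eq)
    finally show ?thesis using spos[of e] by simp
  qed
  have b2: "norm (q e * (1 - of_real (xr e))) \<le> 2 * norm (s e)" for e
  proof -
    have k: "norm (q e) * (norm (p e))\<^sup>2 \<le> s e * (R e + S e + d e)"
    proof -
      have "norm (q e) * (norm (p e))\<^sup>2 \<le> s e * ((norm (q e))\<^sup>2 + (norm (p e))\<^sup>2 + (s e)\<^sup>2)"
        by (rule key_ineq) (use spos ab in \<open>auto simp: mult.commute\<close>)
      then show ?thesis unfolding Dform by (simp add: add.commute)
    qed
    have k2: "norm (q e) * (s e)\<^sup>2 \<le> s e * (R e + S e + d e)"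
    proof -
      have "0 \<le> (norm (q e) - s e)\<^sup>2" by simp
      then have "2 * (norm (q e) * s e) \<le> (norm (q e))\<^sup>2 + (s e)\<^sup>2" by (simp add: power2_diff)
      moreover have "0 \<le> norm (q e) * s e" using spos[of e] by simp
      ultimately have "norm (q e) * s e \<le> (norm (p e))\<^sup>2 + (norm (q e))\<^sup>2 + (s e)\<^sup>2"
        using zero_le_power2[of "norm (p e)"] by linarith
      then have "s e * (norm (q e) * s e) \<le> s e * ((norm (p e))\<^sup>2 + (norm (q e))\<^sup>2 + (s e)\<^sup>2)"
        using spos[of e] by (intro mult_left_mono) auto
      then show ?thesis unfolding Dform by (simp add: power2_eq_square mult.commute mult.left_commute)
    qed
    have "1 - xr e = (R e + d e) / (R e + S e + d e)"
    proof -
      have "(R e + d e) / (R e + S e + d e) = ((R e + S e + d e) - S e) / (R e + S e + d e)" by simp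
      also have "\<dots> = (R e + S e + d e) / (R e + S e + d e) - S e / (R e + S e + d e)"
        by (rule diff_divide_distrib)
      also have "\<dots> = 1 - xr e" unfolding xeq using Dpos[of e] by simp
      finally show ?thesis by simp
    qed
    then have "norm (q e * (1 - of_real (xr e))) = norm (q e) * ((R e + d e) / (R e + S e + d e))"
    proof -
      have "q e * (1 - of_real (xr e)) = q e * of_real (1 - xr e)" by simp
      then have "norm (q e * (1 - of_real (xr e))) = norm (q e) * \<bar>1 - xr e\<bar>"
        by (simp only: norm_mult norm_of_real)
      also have "\<bar>1 - xr e\<bar> = 1 - xr e" using x01[of e] by simp
      finally show ?thesis using \<open>1 - xr e = _\<close> by simp
    qed
    also have "\<dots> = (norm (q e) * (norm (p e))\<^sup>2 + norm (q e) * (s e)\<^sup>2) / (R e + S e + d e)"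
      unfolding R_def sq[symmetric] by (simp add: distrib_left)
    also have "\<dots> \<le> 2 * s e" using k k2 Dpos[of e] by (simp add: pos_divide_le_eq)
    finally show ?thesis using spos[of e] by simp
  qed
  have nd: "negl d"
  proof -
    have "negl (\<lambda>e. norm (p e * q e))" by (rule negl_le[where K=1, OF n]) auto
    then have m: "negl (\<lambda>e. norm (p e * q e) + E e)" by (rule negl_add[OF _ negE])
    show ?thesis
    proof (rule negl_le[where K=1, OF m], rule always_eventually, rule allI)
      fix e
      have "d e = sqrt ((norm (p e) * norm (q e))\<^sup>2 + (E e)\<^sup>2)"
        unfolding d_def R_def S_def by (simp add: power_mult_distrib power2_eq_square)
      also have "\<dots> \<le> norm (p e) * norm (q e) + E e"
        by (rule sqrt_bound(2)) (use Epos[of e] in auto)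
      finally show "norm (d e) \<le> 1 * norm (norm (p e * q e) + E e)"
        using dpos[of e] Epos[of e] by (simp add: norm_mult)
    qed
  qed
  have ns: "negl s"
  proof -
    have "negl (\<lambda>e. sqrt \<bar>d e\<bar>)" by (rule negl_sqrt[OF nd])
    then show ?thesis unfolding s_def using dpos by (simp add: less_imp_le)
  qed
  have n1: "negl (\<lambda>e. p e * of_real (xr e))"
    by (rule negl_le[where K=1, OF ns]) (use b1 in \<open>auto intro!: always_eventually\<close>)
  have n2: "negl (\<lambda>e. q e * (1 - of_real (xr e)))"
    by (rule negl_le[where K=2, OF ns]) (use b2 in \<open>auto intro!: always_eventually\<close>)
  show ?thesis by (rule that[OF xsm x01 n1 n2])
qed



lemma negl_equiv: "negl (\<lambda>e. f e - g e) \<Longrightarrow> negl f \<longleftrightarrow> negl g"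
proof
  assume d: "negl (\<lambda>e. f e - g e)"
  have d2: "negl (\<lambda>e. g e - f e)" using negl_uminus[OF d] by simp
  show "negl f \<Longrightarrow> negl g" using negl_transfer[OF d2] .
  show "negl g \<Longrightarrow> negl f" using negl_transfer[OF d] .
qed

lemma main_generic:
  assumes nsq: "\<And>f::real \<Rightarrow> 'a::real_normed_field. smooth_net f \<Longrightarrow> smooth_net (\<lambda>e. (norm (f e))\<^sup>2)"
  shows "\<forall>r \<in> carrier (Ksm :: (real \<Rightarrow> 'a) set ring). \<forall>s \<in> carrier (Ksm :: (real \<Rightarrow> 'a) set ring).
     let K = (Ksm :: (real \<Rightarrow> 'a) set ring) in
     ((r \<otimes>\<^bsub>K\<^esub> s = \<zero>\<^bsub>K\<^esub>)
        \<longleftrightarrow> (\<exists>x \<in> carrier K. r \<otimes>\<^bsub>K\<^esub> x = \<zero>\<^bsub>K\<^esub> \<and> s \<otimes>\<^bsub>K\<^esub> (\<one>\<^bsub>K\<^esub> \<ominus>\<^bsub>K\<^esub> x) = \<zero>\<^bsub>K\<^esub>)) \<and>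
     ((r \<otimes>\<^bsub>K\<^esub> s = \<zero>\<^bsub>K\<^esub>) \<longleftrightarrow> (Ann K r <+>\<^bsub>K\<^esub> Ann K s = carrier K)) \<and>
     ((r \<otimes>\<^bsub>K\<^esub> s = \<zero>\<^bsub>K\<^esub>) \<longleftrightarrow> (gwedge (gabs r) (gabs s) = \<zero>\<^bsub>(Ksm :: (real \<Rightarrow> real) set ring)\<^esub>))"
proof (intro ballI, unfold Let_def)
  fix r s assume r: "r \<in> carrier (Ksm :: (real \<Rightarrow> 'a) set ring)" and s: "s \<in> carrier (Ksm :: (real \<Rightarrow> 'a) set ring)"
  interpret K: cring "Ksm :: (real \<Rightarrow> 'a) set ring" by (rule Ksm_cring)
  interpret H: ring_hom_cring "net_ring EM_sm" "Ksm :: (real \<Rightarrow> 'a) set ring" "a_r_coset (net_ring EM_sm) N_sm"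
    by (rule Ksm_hom)
  let ?h = "a_r_coset (net_ring (EM_sm :: (real \<Rightarrow> 'a) set)) N_sm"
  obtain p a where p: "p \<in> EM_sm" "r = ?h p" and a: "a \<in> EM_sm" "gabs r = a_r_coset (net_ring EM_sm) N_sm a"
    and pa: "negl (\<lambda>e. a e - norm (p e))"
    using gabs_prop[OF nsq r] by metis
  obtain q b where q: "q \<in> EM_sm" "s = ?h q" and b: "b \<in> EM_sm" "gabs s = a_r_coset (net_ring EM_sm) N_sm b"
    and qb: "negl (\<lambda>e. b e - norm (q e))"
    using gabs_prop[OF nsq s] by metis
  have EMa: "netalg (EM_sm :: (real \<Rightarrow> 'a) set)" by (rule EMsm_alg)
  have zero_iff: "?h f = \<zero>\<^bsub>Ksm\<^esub> \<longleftrightarrow> negl f" if "f \<in> EM_sm" for f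
    using Nsm_zero_iff[OF that] that unfolding zero_Ksm by (auto simp: N_sm_def EM_sm_def negligible_iff)
  have pq: "(\<lambda>e. p e * q e) \<in> EM_sm" by (rule netalg.mult_cl[OF EMa p(1) q(1)])
  have rs: "r \<otimes>\<^bsub>Ksm\<^esub> s = ?h (\<lambda>e. p e * q e)"
    using H.hom_mult[of p q] p q by simp
  have Z: "r \<otimes>\<^bsub>Ksm\<^esub> s = \<zero>\<^bsub>Ksm\<^esub> \<longleftrightarrow> negl (\<lambda>e. p e * q e)"
    unfolding rs by (rule zero_iff[OF pq])
  have ii: "(\<exists>x \<in> carrier Ksm. r \<otimes>\<^bsub>Ksm\<^esub> x = \<zero>\<^bsub>Ksm\<^esub> \<and> s \<otimes>\<^bsub>Ksm\<^esub> (\<one>\<^bsub>Ksm\<^esub> \<ominus>\<^bsub>Ksm\<^esub> x) = \<zero>\<^bsub>Ksm\<^esub>)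
      \<longleftrightarrow> r \<otimes>\<^bsub>Ksm\<^esub> s = \<zero>\<^bsub>Ksm\<^esub>"
  proof
    assume "\<exists>x \<in> carrier Ksm. r \<otimes>\<^bsub>Ksm\<^esub> x = \<zero>\<^bsub>Ksm\<^esub> \<and> s \<otimes>\<^bsub>Ksm\<^esub> (\<one>\<^bsub>Ksm\<^esub> \<ominus>\<^bsub>Ksm\<^esub> x) = \<zero>\<^bsub>Ksm\<^esub>"
    then obtain x where x: "x \<in> carrier Ksm" "r \<otimes>\<^bsub>Ksm\<^esub> x = \<zero>\<^bsub>Ksm\<^esub>" "s \<otimes>\<^bsub>Ksm\<^esub> (\<one>\<^bsub>Ksm\<^esub> \<ominus>\<^bsub>Ksm\<^esub> x) = \<zero>\<^bsub>Ksm\<^esub>"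
      by blast
    have "r \<otimes>\<^bsub>Ksm\<^esub> s = s \<otimes>\<^bsub>Ksm\<^esub> (r \<otimes>\<^bsub>Ksm\<^esub> x) \<oplus>\<^bsub>Ksm\<^esub> r \<otimes>\<^bsub>Ksm\<^esub> (s \<otimes>\<^bsub>Ksm\<^esub> (\<one>\<^bsub>Ksm\<^esub> \<ominus>\<^bsub>Ksm\<^esub> x))"
      using r s x(1) by algebra
    then show "r \<otimes>\<^bsub>Ksm\<^esub> s = \<zero>\<^bsub>Ksm\<^esub>" using x r s by simp
  next
    assume "r \<otimes>\<^bsub>Ksm\<^esub> s = \<zero>\<^bsub>Ksm\<^esub>"
    then have n: "negl (\<lambda>e. p e * q e)" using Z by blast
    obtain xr :: "real \<Rightarrow> real" where xr: "smooth_net xr" "\<And>e. 0 \<le> xr e \<and> xr e \<le> 1"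
      "negl (\<lambda>e. p e * of_real (xr e))" "negl (\<lambda>e. q e * (1 - of_real (xr e)))"
      using x_constr[OF nsq p(1) q(1) n] by metis
    define xf :: "real \<Rightarrow> 'a" where "xf = (\<lambda>e. of_real (xr e))"
    have "smooth_net xf" unfolding xf_def by (rule smooth_linear[OF bounded_linear_of_real xr(1)])
    moreover have "modr xf"
    proof (rule modr_le[where K=1, OF modr_const[of "1::real"]], rule always_eventually, rule allI)
      fix e show "norm (xf e) \<le> 1 * norm (1::real)" unfolding xf_def using xr(2)[of e] by simp
    qed
    ultimately have xf: "xf \<in> EM_sm" by (simp add: EM_sm_def moderate_iff)
    have one: "(\<lambda>_. 1) \<in> (EM_sm :: (real \<Rightarrow> 'a) set)" by (rule netalg.one_cl[OF EMa])
    have X: "?h xf \<in> carrier Ksm" using H.hom_closed[of xf] xf by simp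
    have 1: "r \<otimes>\<^bsub>Ksm\<^esub> ?h xf = \<zero>\<^bsub>Ksm\<^esub>"
    proof -
      have "r \<otimes>\<^bsub>Ksm\<^esub> ?h xf = ?h (\<lambda>e. p e * xf e)" using H.hom_mult[of p xf] p xf by simp
      also have "\<dots> = \<zero>\<^bsub>Ksm\<^esub>" using zero_iff[OF netalg.mult_cl[OF EMa p(1) xf]] xr(3)
        by (simp add: xf_def)
      finally show ?thesis .
    qed
    have "\<one>\<^bsub>Ksm\<^esub> \<ominus>\<^bsub>Ksm\<^esub> ?h xf = ?h (\<lambda>e. 1 - xf e)"
    proof -
      have "?h (\<one>\<^bsub>net_ring EM_sm\<^esub> \<ominus>\<^bsub>net_ring EM_sm\<^esub> xf) = ?h (\<one>\<^bsub>net_ring EM_sm\<^esub>) \<ominus>\<^bsub>Ksm\<^esub> ?h xf"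
      proof -
        have xc: "xf \<in> carrier (net_ring EM_sm)" using xf by simp
        have e1: "?h (\<one>\<^bsub>net_ring EM_sm\<^esub> \<oplus>\<^bsub>net_ring EM_sm\<^esub> \<ominus>\<^bsub>net_ring EM_sm\<^esub> xf)
            = ?h \<one>\<^bsub>net_ring EM_sm\<^esub> \<oplus>\<^bsub>Ksm\<^esub> ?h (\<ominus>\<^bsub>net_ring EM_sm\<^esub> xf)"
          by (rule H.hom_add[OF H.R.one_closed H.R.a_inv_closed[OF xc]])
        have e2: "?h (\<ominus>\<^bsub>net_ring EM_sm\<^esub> xf) = \<ominus>\<^bsub>Ksm\<^esub> ?h xf" by (rule H.hom_a_inv[OF xc])
        show ?thesis unfolding a_minus_def e1 e2 ..
      qed
      moreover have "\<one>\<^bsub>net_ring EM_sm\<^esub> \<ominus>\<^bsub>net_ring EM_sm\<^esub> xf = (\<lambda>e. 1 - xf e)"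
        using netalg.minus[OF EMa one xf] by simp
      ultimately show ?thesis using H.hom_one by simp
    qed
    moreover have "s \<otimes>\<^bsub>Ksm\<^esub> ?h (\<lambda>e. 1 - xf e) = \<zero>\<^bsub>Ksm\<^esub>"
    proof -
      have m: "(\<lambda>e. 1 - xf e) \<in> EM_sm" using netalg.minus[OF EMa one xf] H.R.minus_closed[of "\<lambda>_. 1" xf] one xf
        by simp
      have "s \<otimes>\<^bsub>Ksm\<^esub> ?h (\<lambda>e. 1 - xf e) = ?h (\<lambda>e. q e * (1 - xf e))" using H.hom_mult[of q] q m by simp
      also have "\<dots> = \<zero>\<^bsub>Ksm\<^esub>" using zero_iff[OF netalg.mult_cl[OF EMa q(1) m]] xr(4)
        by (simp add: xf_def)
      finally show ?thesis .
    qed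
    ultimately show "\<exists>x \<in> carrier Ksm. r \<otimes>\<^bsub>Ksm\<^esub> x = \<zero>\<^bsub>Ksm\<^esub> \<and> s \<otimes>\<^bsub>Ksm\<^esub> (\<one>\<^bsub>Ksm\<^esub> \<ominus>\<^bsub>Ksm\<^esub> x) = \<zero>\<^bsub>Ksm\<^esub>"
      using X 1 by auto
  qed
  have iii: "(Ann Ksm r <+>\<^bsub>Ksm\<^esub> Ann Ksm s = carrier Ksm) \<longleftrightarrow>
      (\<exists>x \<in> carrier Ksm. r \<otimes>\<^bsub>Ksm\<^esub> x = \<zero>\<^bsub>Ksm\<^esub> \<and> s \<otimes>\<^bsub>Ksm\<^esub> (\<one>\<^bsub>Ksm\<^esub> \<ominus>\<^bsub>Ksm\<^esub> x) = \<zero>\<^bsub>Ksm\<^esub>)"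
  proof
    assume eq: "Ann Ksm r <+>\<^bsub>Ksm\<^esub> Ann Ksm s = carrier Ksm"
    have "\<one>\<^bsub>Ksm\<^esub> \<in> Ann Ksm r <+>\<^bsub>Ksm\<^esub> Ann Ksm s" unfolding eq by simp
    then obtain u v where uv: "u \<in> Ann Ksm r" "v \<in> Ann Ksm s" "\<one>\<^bsub>Ksm\<^esub> = u \<oplus>\<^bsub>Ksm\<^esub> v"
      unfolding set_add_def' by auto
    have uc: "u \<in> carrier Ksm" "v \<in> carrier Ksm" using uv by (auto simp: Ann_def)
    have "\<one>\<^bsub>Ksm\<^esub> \<ominus>\<^bsub>Ksm\<^esub> u = v" using uc uv(3) by algebra
    then show "\<exists>x \<in> carrier Ksm. r \<otimes>\<^bsub>Ksm\<^esub> x = \<zero>\<^bsub>Ksm\<^esub> \<and> s \<otimes>\<^bsub>Ksm\<^esub> (\<one>\<^bsub>Ksm\<^esub> \<ominus>\<^bsub>Ksm\<^esub> x) = \<zero>\<^bsub>Ksm\<^esub>"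
      using uv uc by (intro bexI[of _ u]) (auto simp: Ann_def)
  next
    assume "\<exists>x \<in> carrier Ksm. r \<otimes>\<^bsub>Ksm\<^esub> x = \<zero>\<^bsub>Ksm\<^esub> \<and> s \<otimes>\<^bsub>Ksm\<^esub> (\<one>\<^bsub>Ksm\<^esub> \<ominus>\<^bsub>Ksm\<^esub> x) = \<zero>\<^bsub>Ksm\<^esub>"
    then obtain x where x: "x \<in> carrier Ksm" "r \<otimes>\<^bsub>Ksm\<^esub> x = \<zero>\<^bsub>Ksm\<^esub>" "s \<otimes>\<^bsub>Ksm\<^esub> (\<one>\<^bsub>Ksm\<^esub> \<ominus>\<^bsub>Ksm\<^esub> x) = \<zero>\<^bsub>Ksm\<^esub>"
      by blast
    show "Ann Ksm r <+>\<^bsub>Ksm\<^esub> Ann Ksm s = carrier Ksm"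
    proof
      show "Ann Ksm r <+>\<^bsub>Ksm\<^esub> Ann Ksm s \<subseteq> carrier Ksm"
        unfolding set_add_def' by (auto simp: Ann_def)
      show "carrier Ksm \<subseteq> Ann Ksm r <+>\<^bsub>Ksm\<^esub> Ann Ksm s"
      proof
        fix t :: "(real \<Rightarrow> 'a) set" assume t: "t \<in> carrier Ksm"
        have A1: "t \<otimes>\<^bsub>Ksm\<^esub> x \<in> Ann Ksm r"
        proof -
          have "r \<otimes>\<^bsub>Ksm\<^esub> (t \<otimes>\<^bsub>Ksm\<^esub> x) = t \<otimes>\<^bsub>Ksm\<^esub> (r \<otimes>\<^bsub>Ksm\<^esub> x)" using r t x(1) by algebra
          then show ?thesis using x t by (simp add: Ann_def)
        qed
        have A2: "t \<otimes>\<^bsub>Ksm\<^esub> (\<one>\<^bsub>Ksm\<^esub> \<ominus>\<^bsub>Ksm\<^esub> x) \<in> Ann Ksm s"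
        proof -
          have "s \<otimes>\<^bsub>Ksm\<^esub> (t \<otimes>\<^bsub>Ksm\<^esub> (\<one>\<^bsub>Ksm\<^esub> \<ominus>\<^bsub>Ksm\<^esub> x)) = t \<otimes>\<^bsub>Ksm\<^esub> (s \<otimes>\<^bsub>Ksm\<^esub> (\<one>\<^bsub>Ksm\<^esub> \<ominus>\<^bsub>Ksm\<^esub> x))"
            using s t x(1) by algebra
          then show ?thesis using x t by (simp add: Ann_def)
        qed
        have "t = t \<otimes>\<^bsub>Ksm\<^esub> x \<oplus>\<^bsub>Ksm\<^esub> t \<otimes>\<^bsub>Ksm\<^esub> (\<one>\<^bsub>Ksm\<^esub> \<ominus>\<^bsub>Ksm\<^esub> x)" using t x(1) by algebra
        then show "t \<in> Ann Ksm r <+>\<^bsub>Ksm\<^esub> Ann Ksm s" using A1 A2 unfolding set_add_def' by blast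
      qed
    qed
  qed
  have iv: "gwedge (gabs r) (gabs s) = \<zero>\<^bsub>(Ksm :: (real \<Rightarrow> real) set ring)\<^esub> \<longleftrightarrow> negl (\<lambda>e. p e * q e)"
  proof -
    obtain w where w: "w \<in> EM_sm" "gwedge (a_r_coset (net_ring EM_sm) N_sm a) (a_r_coset (net_ring EM_sm) N_sm b) = a_r_coset (net_ring EM_sm) N_sm w"
      "negl (\<lambda>e. w e - min (a e) (b e))"
      using gwedge_prop[OF a(1) b(1)] by metis
    have "gwedge (gabs r) (gabs s) = \<zero>\<^bsub>(Ksm :: (real \<Rightarrow> real) set ring)\<^esub> \<longleftrightarrow> w \<in> N_sm"
      unfolding a(2) b(2) w(2) zero_Ksm by (rule Nsm_zero_iff[OF w(1)])
    also have "\<dots> \<longleftrightarrow> negl w" using w(1) by (auto simp: N_sm_def EM_sm_def negligible_iff)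
    also have "\<dots> \<longleftrightarrow> negl (\<lambda>e. min (a e) (b e))" by (rule negl_equiv[OF w(3)])
    also have "\<dots> \<longleftrightarrow> negl (\<lambda>e. min (norm (p e)) (norm (q e)))"
    proof (rule negl_equiv)
      have n3: "negl (\<lambda>e. \<bar>a e - norm (p e)\<bar> + \<bar>b e - norm (q e)\<bar>)"
        by (rule negl_add[OF negl_abs[OF pa] negl_abs[OF qb]])
      show "negl (\<lambda>e. min (a e) (b e) - min (norm (p e)) (norm (q e)))"
        by (rule negl_le[where K=1, OF n3]) (auto intro!: always_eventually simp: min_lip)
    qed
    also have "\<dots> \<longleftrightarrow> negl (\<lambda>e. p e * q e)"
      using negl_prod_min[of p q] p(1) q(1) by (simp add: EM_sm_def moderate_iff)
    finally show ?thesis .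
  qed
  show "(r \<otimes>\<^bsub>Ksm\<^esub> s = \<zero>\<^bsub>Ksm\<^esub> \<longleftrightarrow>
          (\<exists>x\<in>carrier Ksm. r \<otimes>\<^bsub>Ksm\<^esub> x = \<zero>\<^bsub>Ksm\<^esub> \<and> s \<otimes>\<^bsub>Ksm\<^esub> (\<one>\<^bsub>Ksm\<^esub> \<ominus>\<^bsub>Ksm\<^esub> x) = \<zero>\<^bsub>Ksm\<^esub>)) \<and>
         (r \<otimes>\<^bsub>Ksm\<^esub> s = \<zero>\<^bsub>Ksm\<^esub> \<longleftrightarrow> Ann Ksm r <+>\<^bsub>Ksm\<^esub> Ann Ksm s = carrier Ksm) \<and>
         (r \<otimes>\<^bsub>Ksm\<^esub> s = \<zero>\<^bsub>Ksm\<^esub> \<longleftrightarrow> gwedge (gabs r) (gabs s) = \<zero>\<^bsub>(Ksm :: (real \<Rightarrow> real) set ring)\<^esub>)"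
    using ii iii iv Z by blast
qed


lemma nsq_real: "smooth_net (f :: real \<Rightarrow> real) \<Longrightarrow> smooth_net (\<lambda>e. (norm (f e))\<^sup>2)"
proof -
  assume f: "smooth_net f"
  have "smooth_net (\<lambda>e. f e * f e)" by (rule smooth_mult[OF f f])
  then show ?thesis by (simp add: power2_eq_square)
qed

lemma nsq_complex: "smooth_net (f :: real \<Rightarrow> complex) \<Longrightarrow> smooth_net (\<lambda>e. (norm (f e))\<^sup>2)"
proof -
  assume f: "smooth_net f"
  have re: "smooth_net (\<lambda>e. Re (f e))" by (rule smooth_linear[OF bounded_linear_Re f])
  have im: "smooth_net (\<lambda>e. Im (f e))" by (rule smooth_linear[OF bounded_linear_Im f])
  have "smooth_net (\<lambda>e. Re (f e) * Re (f e) + Im (f e) * Im (f e))"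
    by (rule smooth_add[OF smooth_mult[OF re re] smooth_mult[OF im im]])
  moreover have "(\<lambda>e. (norm (f e))\<^sup>2) = (\<lambda>e. Re (f e) * Re (f e) + Im (f e) * Im (f e))"
  proof
    fix e show "(norm (f e))\<^sup>2 = Re (f e) * Re (f e) + Im (f e) * Im (f e)"
      by (subst cmod_power2) (simp add: power2_eq_square)
  qed
  ultimately show ?thesis by simp
qed

theorem theorem4p19:
  shows "(\<forall>r \<in> carrier (Ksm :: (real \<Rightarrow> real) set ring). \<forall>s \<in> carrier (Ksm :: (real \<Rightarrow> real) set ring).
     let K = (Ksm :: (real \<Rightarrow> real) set ring) in
     ((r \<otimes>\<^bsub>K\<^esub> s = \<zero>\<^bsub>K\<^esub>)
        \<longleftrightarrow> (\<exists>x \<in> carrier K. r \<otimes>\<^bsub>K\<^esub> x = \<zero>\<^bsub>K\<^esub> \<and> s \<otimes>\<^bsub>K\<^esub> (\<one>\<^bsub>K\<^esub> \<ominus>\<^bsub>K\<^esub> x) = \<zero>\<^bsub>K\<^esub>)) \<and>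
     ((r \<otimes>\<^bsub>K\<^esub> s = \<zero>\<^bsub>K\<^esub>) \<longleftrightarrow> (Ann K r <+>\<^bsub>K\<^esub> Ann K s = carrier K)) \<and>
     ((r \<otimes>\<^bsub>K\<^esub> s = \<zero>\<^bsub>K\<^esub>) \<longleftrightarrow> (gwedge (gabs r) (gabs s) = \<zero>\<^bsub>(Ksm :: (real \<Rightarrow> real) set ring)\<^esub>)))
   \<and>
   (\<forall>r \<in> carrier (Ksm :: (real \<Rightarrow> complex) set ring). \<forall>s \<in> carrier (Ksm :: (real \<Rightarrow> complex) set ring).
     let K = (Ksm :: (real \<Rightarrow> complex) set ring) in
     ((r \<otimes>\<^bsub>K\<^esub> s = \<zero>\<^bsub>K\<^esub>)
        \<longleftrightarrow> (\<exists>x \<in> carrier K. r \<otimes>\<^bsub>K\<^esub> x = \<zero>\<^bsub>K\<^esub> \<and> s \<otimes>\<^bsub>K\<^esub> (\<one>\<^bsub>K\<^esub> \<ominus>\<^bsub>K\<^esub> x) = \<zero>\<^bsub>K\<^esub>)) \<and>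
     ((r \<otimes>\<^bsub>K\<^esub> s = \<zero>\<^bsub>K\<^esub>) \<longleftrightarrow> (Ann K r <+>\<^bsub>K\<^esub> Ann K s = carrier K)) \<and>
     ((r \<otimes>\<^bsub>K\<^esub> s = \<zero>\<^bsub>K\<^esub>) \<longleftrightarrow> (gwedge (gabs r) (gabs s) = \<zero>\<^bsub>(Ksm :: (real \<Rightarrow> real) set ring)\<^esub>)))"
  using main_generic[OF nsq_real] main_generic[OF nsq_complex] by (intro conjI)

end
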